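(* Let $n=p_1^{\alpha_1}\cdots p_r^{\alpha_r}$ be the canonical factorization of $n$ into distinct primes and let $d=p_1^{\beta_1}\cdots p_r^{\beta_r}$ be a square-free divisor of $n$ ($0\le\beta_\ell\le1$ for all $\ell$). Then for every $z\in\mathbb{C}$, $$\sum_{k\mid n}\frac{1}{|c_d(k)|^z}=\prod_{\ell=1}^r\Big(1+\frac{\alpha_\ell}{(p_\ell-1)^{\beta_\ell z}}\Big).$$
   Context: For integers $m\ge1$ and $x$, $c_m(x)=\sum_{1\le j\le m,\ (j,m)=1}e^{2\pi ijx/m}$ is the Ramanujan sum (for square-free $d$ it is a nonzero integer at every divisor $k$ of $n$); for a positive real $a$, $a^z=e^{z\log a}$ with the real logarithm; the sum is over positive divisors $k$ of $n$. *)

theory Defs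
  imports "HOL-Analysis.Analysis" "HOL-Computational_Algebra.Computational_Algebra"
begin

definition ramanujan_sum :: "nat \<Rightarrow> int \<Rightarrow> complex" where
  "ramanujan_sum m x =
     (\<Sum>j\<in>{j\<in>{1..m}. coprime j m}. exp (2 * of_real pi * \<i> * of_int (int j * x) / of_nat m))"

end

theory Submission imports Defs "HOL-Number_Theory.Number_Theory" begin

definition EE :: "nat \<Rightarrow> int \<Rightarrow> complex" where
  "EE m u = exp (2 * of_real pi * \<i> * of_int u / of_nat m)"

lemma EE_cong:
  assumes "m > 0" "[u = v] (mod int m)"
  shows "EE m u = EE m v"
proof -
  from assms(2) obtain k where k: "u = v + int m * k"
    by (metis cong_iff_lin cong_sym)
  have "2 * of_real pi * \<i> * of_int u / of_nat m
      = 2 * of_real pi * \<i> * of_int v / of_nat m + \<i> * (of_int k * (of_real pi * 2))"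
    using assms(1) by (simp add: k field_simps)
  then show ?thesis unfolding EE_def by simp
qed

definition U :: "nat \<Rightarrow> nat set" where
  "U m = {j. j < m \<and> coprime j m}"

lemma finite_U [simp]: "finite (U m)" by (simp add: U_def)

lemma bij_U:
  assumes "m > 0"
  shows "bij_betw (\<lambda>j. j mod m) {j\<in>{1..m}. coprime j m} (U m)"
proof (rule bij_betw_byWitness[where f' = "\<lambda>j. if j = 0 then m else j"])
  show "\<forall>a\<in>{j \<in> {1..m}. coprime j m}. (if a mod m = 0 then m else a mod m) = a"
    by (auto simp: le_less)
  show "\<forall>a'\<in>U m. (if a' = 0 then m else a') mod m = a'"
    by (auto simp: U_def)
  show "(\<lambda>j. j mod m) ` {j \<in> {1..m}. coprime j m} \<subseteq> U m"
    using assms by (auto simp: U_def)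
  show "(\<lambda>j. if j = 0 then m else j) ` U m \<subseteq> {j \<in> {1..m}. coprime j m}"
    using assms by (auto simp: U_def)
qed

lemma card_U: "m > 0 \<Longrightarrow> card (U m) = totient m"
  using bij_betw_same_card[OF bij_U, of m]
  by (simp add: totient_def totatives_def atLeastAtMost_iff greaterThanAtMost_iff Suc_le_eq)

lemma ram_alt:
  assumes "m > 0"
  shows "ramanujan_sum m x = (\<Sum>j\<in>U m. EE m (int j * x))"
proof -
  have "ramanujan_sum m x = (\<Sum>j\<in>{j\<in>{1..m}. coprime j m}. EE m (int j * x))"
    by (simp add: ramanujan_sum_def EE_def)
  also have "\<dots> = (\<Sum>j\<in>{j\<in>{1..m}. coprime j m}. EE m (int (j mod m) * x))"
  proof (rule sum.cong[OF refl])
    fix j assume "j \<in> {j\<in>{1..m}. coprime j m}"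
    show "EE m (int j * x) = EE m (int (j mod m) * x)"
      by (rule EE_cong[OF assms]) (simp add: cong_def zmod_int mod_mult_left_eq)
  qed
  also have "\<dots> = (\<Sum>j\<in>U m. EE m (int j * x))"
    using sum.reindex_bij_betw[OF bij_U[OF assms], of "\<lambda>j. EE m (int j * x)"] by simp
  finally show ?thesis .
qed

lemma EE_mult:
  assumes "a > 0" "b > 0"
  shows "EE a u * EE b v = EE (a*b) (u * int b + v * int a)"
proof -
  have "2 * of_real pi * \<i> * of_int u / of_nat a + 2 * of_real pi * \<i> * of_int v / of_nat b
      = 2 * of_real pi * \<i> * of_int (u * int b + v * int a) / (of_nat (a*b) :: complex)"
    using assms by (simp add: field_simps)
  then show ?thesis unfolding EE_def by (simp add: exp_add[symmetric])
qed

lemma coprime_lin: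
  fixes a b j1 j2 :: nat
  assumes "coprime a b" "a > 0"
  shows "coprime (j1 * b + j2 * a) a \<longleftrightarrow> coprime j1 a"
proof -
  have "coprime (j1 * b + j2 * a) a \<longleftrightarrow> coprime ((j1 * b + j2 * a) mod a) a"
    by (rule coprime_mod_left_iff[symmetric]) (use assms in simp)
  also have "(j1 * b + j2 * a) mod a = (j1 * b) mod a" by simp
  also have "coprime ((j1 * b) mod a) a \<longleftrightarrow> coprime (j1*b) a"
    by (rule coprime_mod_left_iff) (use assms in simp)
  also have "\<dots> \<longleftrightarrow> coprime j1 a"
  proof -
    have "coprime b a" using assms(1) by (simp add: coprime_commute)
    then show ?thesis by simp
  qed
  finally show ?thesis .
qed

lemma ram_mult:
  assumes "coprime a b" "a > 0" "b > 0"
  shows "ramanujan_sum (a*b) x = ramanujan_sum a x * ramanujan_sum b x"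
proof -
  define h where "h = (\<lambda>(j1::nat, j2::nat). (j1 * b + j2 * a) mod (a*b))"
  have ab: "a * b > 0" using assms by simp
  have "ramanujan_sum a x * ramanujan_sum b x
      = (\<Sum>j1\<in>U a. \<Sum>j2\<in>U b. EE a (int j1 * x) * EE b (int j2 * x))"
    by (simp add: ram_alt assms sum_product)
  also have "\<dots> = (\<Sum>p\<in>U a \<times> U b. EE (a*b) (int (h p) * x))"
  proof (subst sum.cartesian_product, rule sum.cong[OF refl], clarify)
    fix j1 j2 assume "j1 \<in> U a" "j2 \<in> U b"
    have "EE a (int j1 * x) * EE b (int j2 * x) = EE (a*b) (int j1 * x * int b + int j2 * x * int a)"
      by (rule EE_mult[OF assms(2,3)])
    also have "\<dots> = EE (a*b) (int (h (j1, j2)) * x)"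
    proof (rule EE_cong[OF ab])
      have "int (h (j1, j2)) * x mod int (a*b) = ((int j1 * int b + int j2 * int a) * x) mod int (a*b)"
        by (simp add: h_def zmod_int mod_mult_left_eq)
      then show "[int j1 * x * int b + int j2 * x * int a = int (h (j1, j2)) * x] (mod int (a * b))"
        by (simp add: cong_def algebra_simps)
    qed
    finally show "EE a (int j1 * x) * EE b (int j2 * x) = EE (a*b) (int (h (j1, j2)) * x)" .
  qed
  also have "\<dots> = (\<Sum>j\<in>U (a*b). EE (a*b) (int j * x))"
  proof -
    have inj: "inj_on h (U a \<times> U b)"
    proof (rule inj_onI, clarify)
      fix j1 j2 k1 k2 assume j: "j1 \<in> U a" "j2 \<in> U b" "k1 \<in> U a" "k2 \<in> U b"
        and eq: "h (j1, j2) = h (k1, k2)"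
      have c1: "[j1 * b + j2 * a = k1 * b + k2 * a] (mod a*b)"
        using eq by (simp add: h_def cong_def)
      have "[j1 * b + j2 * a = k1 * b + k2 * a] (mod a)"
        using cong_modulus_mult_nat[OF c1] .
      hence "[j1 * b = k1 * b] (mod a)"
        by (simp add: cong_def)
      hence "[j1 = k1] (mod a)" using assms(1) by (simp add: cong_mult_rcancel_nat coprime_commute)
      hence 1: "j1 = k1" using j by (intro cong_less_imp_eq_nat) (auto simp: U_def)
      have "[j1 * b + j2 * a = k1 * b + k2 * a] (mod b)"
        using cong_modulus_mult_nat[OF c1[unfolded mult.commute[of a b]]] .
      hence "[j2 * a = k2 * a] (mod b)"
        by (simp add: cong_def)
      hence "[j2 = k2] (mod b)" using assms(1) by (simp add: cong_mult_rcancel_nat)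
      hence 2: "j2 = k2" using j by (intro cong_less_imp_eq_nat) (auto simp: U_def)
      show "j1 = k1 \<and> j2 = k2" using 1 2 by simp
    qed
    have sub: "h ` (U a \<times> U b) \<subseteq> U (a*b)"
    proof clarify
      fix j1 j2 assume j: "j1 \<in> U a" "j2 \<in> U b"
      have "coprime (j1 * b + j2 * a) a" using coprime_lin[OF assms(1,2)] j by (simp add: U_def)
      moreover have "coprime (j2 * a + j1 * b) b"
        using coprime_lin[OF assms(1)[unfolded coprime_commute[of a b]] assms(3)] j by (simp add: U_def)
      ultimately have "coprime (j1 * b + j2 * a) (a*b)" by (simp add: add.commute)
      then have "coprime ((j1 * b + j2 * a) mod (a*b)) (a*b)"
        by (subst coprime_mod_left_iff) (use ab in auto)
      then show "h (j1, j2) \<in> U (a*b)" using ab unfolding h_def U_def by simp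
    qed
    have "card (h ` (U a \<times> U b)) = card (U (a*b))"
      using card_image[OF inj] assms by (simp add: card_U card_cartesian_product totient_mult_coprime)
    hence img: "h ` (U a \<times> U b) = U (a*b)"
      using sub by (intro card_subset_eq) auto
    show ?thesis using sum.reindex[OF inj, of "\<lambda>j. EE (a*b) (int j * x)"] img by simp
  qed
  also have "\<dots> = ramanujan_sum (a*b) x" using ab by (simp add: ram_alt)
  finally show ?thesis by simp
qed

lemma EE_eq_1:
  assumes "m > 0" "EE m u = 1"
  shows "int m dvd u"
proof -
  from assms(2) obtain n where n: "Im (2 * of_real pi * \<i> * of_int u / of_nat m) = real_of_int (2 * n) * pi"
    unfolding EE_def exp_eq_1 by blast
  hence "2 * pi * real_of_int u / real m = 2 * real_of_int n * pi" by simp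
  hence "real_of_int u = real_of_int n * real m" using assms(1) pi_gt_zero
    by (simp add: field_simps)
  hence "u = n * int m" by (metis of_int_eq_iff of_int_mult of_int_of_nat_eq)
  thus ?thesis by simp
qed

lemma EE_pow: "EE m (int j * x) = EE m x ^ j"
proof -
  have "EE m (int j * x) = exp (of_nat j * (2 * of_real pi * \<i> * of_int x / of_nat m))"
    unfolding EE_def by (simp add: algebra_simps)
  also have "\<dots> = EE m x ^ j" unfolding EE_def by (rule exp_of_nat_mult)
  finally show ?thesis .
qed

lemma ram_prime:
  assumes "prime p"
  shows "ramanujan_sum p x = (if int p dvd x then of_nat (p - 1) else -1)"
proof -
  have p0: "p > 0" using assms prime_gt_0_nat by blast
  have Up: "U p = {..<p} - {0}"
    using assms by (auto simp: U_def prime_nat_iff'' coprime_commute[of _ p] intro: prime_imp_coprime_nat)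
  have cardU: "card (U p) = p - 1" using Up p0 by simp
  show ?thesis
  proof (cases "int p dvd x")
    case True
    have "ramanujan_sum p x = (\<Sum>j\<in>U p. 1)"
      unfolding ram_alt[OF p0]
    proof (rule sum.cong[OF refl])
      fix j assume "j \<in> U p"
      have "EE p (int j * x) = EE p 0"
        by (rule EE_cong[OF p0]) (use True in \<open>simp add: cong_def\<close>)
      thus "EE p (int j * x) = 1" by (simp add: EE_def)
    qed
    thus ?thesis using True cardU by simp
  next
    case False
    define w where "w = EE p x"
    have w1: "w \<noteq> 1" using EE_eq_1[OF p0] False by (auto simp: w_def)
    have wp: "w ^ p = 1"
    proof -
      have "w ^ p = EE p (int p * x)" by (simp add: w_def EE_pow)
      also have "\<dots> = EE p 0" by (rule EE_cong[OF p0]) (simp add: cong_def)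
      finally show ?thesis by (simp add: EE_def)
    qed
    have "(\<Sum>j<p. w ^ j) = 0" using geometric_sum[OF w1, of p] wp by simp
    moreover have "(\<Sum>j<p. w ^ j) = w ^ 0 + (\<Sum>j\<in>U p. w ^ j)"
      unfolding Up using p0 by (subst sum.remove[of _ 0]) auto
    ultimately have "(\<Sum>j\<in>U p. w ^ j) = -1" by (simp add: add_eq_0_iff)
    thus ?thesis using False by (simp add: ram_alt[OF p0] EE_pow w_def)
  qed
qed

lemma ram_prod_primes:
  assumes "finite S" "\<And>p. p \<in> S \<Longrightarrow> prime p"
  shows "ramanujan_sum (\<Prod>S) x = (\<Prod>p\<in>S. ramanujan_sum p x)"
  using assms
proof (induction S rule: finite_induct)
  case empty
  have "ramanujan_sum 1 x = 1"
    by (simp add: ram_alt EE_def U_def)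
  thus ?case by simp
next
  case (insert p F)
  have pp: "prime p" using insert by auto
  have cop: "coprime p (\<Prod>F)"
  proof (rule prod_coprime_right)
    fix q assume q: "q \<in> F"
    hence "p \<noteq> q" "prime q" using insert by auto
    thus "coprime p q" using pp primes_coprime by blast
  qed
  have pos: "\<Prod>F > 0" using insert by (auto intro: prod_pos prime_gt_0_nat)
  have "ramanujan_sum (\<Prod>(insert p F)) x = ramanujan_sum (p * \<Prod>F) x"
    using insert by simp
  also have "\<dots> = ramanujan_sum p x * ramanujan_sum (\<Prod>F) x"
    by (rule ram_mult[OF cop]) (use pp pos prime_gt_0_nat in auto)
  finally show ?case using insert by simp
qed

lemma ram_squarefree_norm:
  assumes "squarefree d" "d > 0"
  shows "norm (ramanujan_sum d x) = (\<Prod>p\<in>prime_factors d. if int p dvd x then real (p - 1) else 1)"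
proof -
  have "d = (\<Prod>p\<in>prime_factors d. p ^ multiplicity p d)"
    using prime_factorization_nat assms(2) by blast
  also have "\<dots> = \<Prod>(prime_factors d)"
    using assms squarefree_factorial_semiring'[of d] by (intro prod.cong) auto
  finally have d: "d = \<Prod>(prime_factors d)" .
  have "ramanujan_sum d x = (\<Prod>p\<in>prime_factors d. ramanujan_sum p x)"
    by (subst d, rule ram_prod_primes) auto
  hence "norm (ramanujan_sum d x) = (\<Prod>p\<in>prime_factors d. norm (ramanujan_sum p x))"
    by (simp add: prod_norm)
  also have "\<dots> = (\<Prod>p\<in>prime_factors d. if int p dvd x then real (p - 1) else 1)"
  proof (intro prod.cong refl)
    fix p assume "p \<in> prime_factors d"
    hence "prime p" by auto
    thus "norm (ramanujan_sum p x) = (if int p dvd x then real (p - 1) else 1)"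
      by (simp add: ram_prime)
  qed
  finally show ?thesis .
qed

lemma powr_prod_real:
  fixes x :: "'a \<Rightarrow> real"
  assumes "finite A" "\<And>i. i \<in> A \<Longrightarrow> x i \<ge> 0"
  shows "complex_of_real (\<Prod>i\<in>A. x i) powr z = (\<Prod>i\<in>A. complex_of_real (x i) powr z)"
  using assms
proof (induction A rule: finite_induct)
  case empty
  then show ?case by (simp add: powr_def)
next
  case (insert a F)
  have "complex_of_real (\<Prod>i\<in>insert a F. x i) = complex_of_real (x a) * complex_of_real (\<Prod>i\<in>F. x i)"
    using insert by simp
  moreover have "(complex_of_real (x a) * complex_of_real (\<Prod>i\<in>F. x i)) powr z
     = complex_of_real (x a) powr z * complex_of_real (\<Prod>i\<in>F. x i) powr z"
    by (rule powr_times_real) (use insert in \<open>auto simp del: of_real_prod intro: prod_nonneg\<close>)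
  ultimately show ?case using insert by (simp del: of_real_prod)
qed

theorem mainTheorem10:
  fixes n d :: nat and z :: complex
  assumes "n \<ge> 1" and "d dvd n" and "squarefree d"
  shows "(\<Sum>k | k dvd n. 1 / (complex_of_real (norm (ramanujan_sum d (int k)))) powr z)
       = (\<Prod>p\<in>prime_factors n.
            1 + of_nat (multiplicity p n)
                / (complex_of_real (real (p - 1))) powr (of_nat (multiplicity p d) * z))"
proof -
  define P where "P = prime_factors n"
  define g where "g = (\<lambda>p a. if (a::nat) = 0 then (1::complex) else
      1 / (complex_of_real (real (p - 1))) powr (of_nat (multiplicity p d) * z))"
  define r where "r = (\<lambda>p a. if (a::nat) = 0 then (1::real) else real (p - 1) ^ multiplicity p d)"
  have n0: "n > 0" using assms(1) by simp
  have d0: "d > 0" using assms(2) n0 by (auto intro: Nat.gr0I)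
  have finP: "finite P" by (simp add: P_def)
  have subP: "prime_factors d \<subseteq> P"
    using assms(2) n0 d0 by (auto simp: P_def in_prime_factors_iff intro: dvd_trans)
  have beta: "multiplicity p d \<le> 1" if "prime p" for p
    using assms(3) d0 squarefree_factorial_semiring''[of d] that by auto
  have step1: "1 / (complex_of_real (norm (ramanujan_sum d (int k)))) powr z
      = (\<Prod>p\<in>P. g p (multiplicity p k))" if k: "k dvd n" for k
  proof -
    have k0: "k \<noteq> 0" using k n0 by auto
    have "norm (ramanujan_sum d (int k)) = (\<Prod>p\<in>prime_factors d. if int p dvd int k then real (p - 1) else 1)"
      by (rule ram_squarefree_norm[OF assms(3) d0])
    also have "\<dots> = (\<Prod>p\<in>P. r p (multiplicity p k))"
    proof (rule prod.mono_neutral_cong_left[OF finP subP])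
      show "\<forall>i\<in>P - prime_factors d. r i (multiplicity i k) = 1"
      proof
        fix i assume "i \<in> P - prime_factors d"
        hence "prime i" "\<not> i dvd d" using d0 by (auto simp: P_def in_prime_factors_iff)
        hence "multiplicity i d = 0" by (simp add: not_dvd_imp_multiplicity_0)
        thus "r i (multiplicity i k) = 1" by (simp add: r_def)
      qed
      show "\<And>p. p \<in> prime_factors d \<Longrightarrow>
          (if int p dvd int k then real (p - 1) else 1) = r p (multiplicity p k)"
      proof -
        fix p assume p: "p \<in> prime_factors d"
        hence pp: "prime p" by auto
        have "multiplicity p d \<noteq> 0" using p by (simp add: prime_factors_multiplicity)
        hence b1: "multiplicity p d = 1" using beta[OF pp] by linarith
        have "(0 < multiplicity p k) = (p dvd k)"
          by (rule prime_multiplicity_gt_zero_iff) (use pp k0 in auto)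
        thus "(if int p dvd int k then real (p - 1) else 1) = r p (multiplicity p k)"
          by (auto simp: r_def b1)
      qed
    qed
    finally have N: "norm (ramanujan_sum d (int k)) = (\<Prod>p\<in>P. r p (multiplicity p k))" .
    have rpos: "r p a \<ge> 0" if "p \<in> P" for p a
      by (simp add: r_def)
    have "1 / (complex_of_real (norm (ramanujan_sum d (int k)))) powr z
        = 1 / (\<Prod>p\<in>P. complex_of_real (r p (multiplicity p k)) powr z)"
      unfolding N by (subst powr_prod_real[OF finP]) (auto simp: rpos simp del: of_real_prod)
    also have "\<dots> = (\<Prod>p\<in>P. 1 / complex_of_real (r p (multiplicity p k)) powr z)"
      by (simp add: prod_dividef)
    also have "\<dots> = (\<Prod>p\<in>P. g p (multiplicity p k))"
    proof (rule prod.cong[OF refl])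
      fix p assume "p \<in> P"
      hence pp: "prime p" by (auto simp: P_def)
      hence p1: "real (p - 1) \<noteq> 0" using prime_gt_1_nat[OF pp] by simp
      show "1 / complex_of_real (r p (multiplicity p k)) powr z = g p (multiplicity p k)"
      proof (cases "multiplicity p k = 0")
        case True thus ?thesis by (simp add: r_def g_def powr_def)
      next
        case False
        show ?thesis
        proof (cases "multiplicity p d = 0")
          case True thus ?thesis using False p1 by (simp add: r_def g_def powr_def)
        next
          case F2: False
          hence "multiplicity p d = 1" using beta[OF pp] by linarith
          thus ?thesis using False by (simp add: r_def g_def)
        qed
      qed
    qed
    finally show ?thesis .
  qed
  have "(\<Sum>k | k dvd n. 1 / (complex_of_real (norm (ramanujan_sum d (int k)))) powr z)
      = (\<Sum>k | k dvd n. \<Prod>p\<in>P. g p (multiplicity p k))"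
    by (rule sum.cong) (auto simp: step1)
  also have "\<dots> = (\<Sum>f\<in>PiE P (\<lambda>p. {0..multiplicity p n}). \<Prod>p\<in>P. g p (f p))"
  proof (rule sum.reindex_bij_witness[where i = "\<lambda>f. \<Prod>p\<in>P. p ^ f p"
        and j = "\<lambda>k. restrict (\<lambda>p. multiplicity p k) P"])
    fix k assume k: "k \<in> {k. k dvd n}"
    hence k0: "k > 0" using n0 by (auto intro: Nat.gr0I)
    have subk: "prime_factors k \<subseteq> P"
      using k n0 k0 by (auto simp: P_def in_prime_factors_iff intro: dvd_trans)
    have "(\<Prod>p\<in>P. p ^ restrict (\<lambda>p. multiplicity p k) P p) = (\<Prod>p\<in>P. p ^ multiplicity p k)"
      by (rule prod.cong) auto
    also have "\<dots> = (\<Prod>p\<in>prime_factors k. p ^ multiplicity p k)"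
    proof (rule prod.mono_neutral_right[OF finP subk], rule ballI)
      fix i assume "i \<in> P - prime_factors k"
      thus "i ^ multiplicity i k = 1" by (auto simp: prime_factors_multiplicity P_def)
    qed
    also have "\<dots> = k" using prime_factorization_nat[OF k0] by simp
    finally show "(\<Prod>p\<in>P. p ^ restrict (\<lambda>p. multiplicity p k) P p) = k" .
    show "restrict (\<lambda>p. multiplicity p k) P \<in> PiE P (\<lambda>p. {0..multiplicity p n})"
      using k n0 by (auto intro: dvd_imp_multiplicity_le)
    show "(\<Prod>p\<in>P. g p (restrict (\<lambda>p. multiplicity p k) P p)) = (\<Prod>p\<in>P. g p (multiplicity p k))"
      by (rule prod.cong) auto
  next
    fix f assume f: "f \<in> PiE P (\<lambda>p. {0..multiplicity p n})"
    have primes: "\<And>x. x \<in> P \<Longrightarrow> prime x" by (auto simp: P_def)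
    have mult: "multiplicity q (\<Prod>p\<in>P. p ^ f p) = (if q \<in> P then f q else 0)" if "prime q" for q
      by (rule multiplicity_prod_prime_powers[OF finP primes that])
    show "restrict (\<lambda>p. multiplicity p (\<Prod>p\<in>P. p ^ f p)) P = f"
    proof
      fix q show "restrict (\<lambda>p. multiplicity p (\<Prod>p\<in>P. p ^ f p)) P q = f q"
        using f mult primes by (auto simp: PiE_def extensional_def)
    qed
    have "(\<Prod>p\<in>P. p ^ f p) dvd (\<Prod>p\<in>P. p ^ multiplicity p n)"
    proof (rule prod_dvd_prod)
      fix a assume "a \<in> P"
      hence "f a \<le> multiplicity a n" using f by (auto simp: PiE_iff)
      thus "a ^ f a dvd a ^ multiplicity a n" by (rule le_imp_power_dvd)
    qed
    also have "\<dots> = n" using prime_factorization_nat[OF n0] by (simp add: P_def)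
    finally show "(\<Prod>p\<in>P. p ^ f p) \<in> {k. k dvd n}" by simp
  qed
  also have "\<dots> = (\<Prod>p\<in>P. \<Sum>a\<in>{0..multiplicity p n}. g p a)"
    by (rule prod_sum_PiE[symmetric]) (auto simp: finP)
  also have "\<dots> = (\<Prod>p\<in>prime_factors n.
            1 + of_nat (multiplicity p n)
                / (complex_of_real (real (p - 1))) powr (of_nat (multiplicity p d) * z))"
    unfolding P_def
  proof (rule prod.cong[OF refl])
    fix p
    have "{0..multiplicity p n} = insert 0 {1..multiplicity p n}" by auto
    hence "(\<Sum>a\<in>{0..multiplicity p n}. g p a) = g p 0 + (\<Sum>a\<in>{1..multiplicity p n}. g p a)"
      by simp
    also have "(\<Sum>a\<in>{1..multiplicity p n}. g p a) = (\<Sum>a\<in>{1..multiplicity p n}. g p 1)"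
      by (rule sum.cong) (auto simp: g_def)
    finally show "(\<Sum>a\<in>{0..multiplicity p n}. g p a) = 1 + of_nat (multiplicity p n)
                / (complex_of_real (real (p - 1))) powr (of_nat (multiplicity p d) * z)"
      by (simp add: g_def)
  qed
  finally show ?thesis .
qed

end
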